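(* Let $\mathcal{X}$ be an input space and let $f_1$ and $f_0$ be probability distributions on $\mathcal{X}$ (of positive and negative examples, respectively). Let $\alpha \in [0,1)$ and $\beta \in (\alpha,1]$, and define the mixtures $$f = \alpha f_1 + (1-\alpha) f_0, \qquad g = \beta f_1 + (1-\beta) f_0$$ ($f$ is the distribution of unlabeled data, $g$ the distribution of the (possibly noisy) positively labeled data). (i) For a classifier $h:\mathcal{X}\to\{0,1\}$ define the true positive rate $\gamma = \mathbb{E}_{f_1}[h(x)]$, the false positive rate $\eta = \mathbb{E}_{f_0}[h(x)]$, and the positive-unlabeled rates $\gamma^{pu} = \mathbb{E}_{g}[h(x)]$, $\eta^{pu} = \mathbb{E}_{f}[h(x)]$. Then $$\gamma = \frac{(1-\alpha)\gamma^{pu} - (1-\beta)\eta^{pu}}{\beta-\alpha}, \qquad \eta = \frac{\beta\eta^{pu} - \alpha\gamma^{pu}}{\beta-\alpha}.$$ (ii) Let $c \in (0,1)$ (in the paper $c = |X_1|/(|X|+|X_1|)$, where $X_1$ is the labeled sample and $X$ the unlabeled sample), define the precision $\rho = \dfrac{\alpha\,\mathbb{E}_{f_1}[h(x)]}{\mathbb{E}_{f}[h(x)]}$ and the positive-unlabeled precision $\rho^{pu} = \dfrac{c\,\mathbb{E}_{g}[h(x)]}{\mathbb{E}_{cg+(1-c)f}[h(x)]}$. Then, whenever these quantities are defined, $$\rho = \frac{\alpha(1-\alpha)}{\beta-\alpha}\left(\frac{1-c}{c}\cdot\frac{\rho^{pu}}{1-\rho^{pu}} - \frac{1-\beta}{1-\alpha}\right),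 \qquad\text{and also}\qquad \rho = \frac{\alpha\gamma}{\eta^{pu}}.$$ (iii) Consider a family of classifiers $\{h_\eta\}_{\eta\in[0,1]}$, $h_\eta:\mathcal{X}\to\{0,1\}$, where $\eta$ is the false positive rate of $h_\eta$, i.e. $\mathbb{E}_{f_0}[h_\eta(x)] = \eta$. Let $\gamma(\eta) = \mathbb{E}_{f_1}[h_\eta(x)]$, $\gamma^{pu}(\eta) = \mathbb{E}_g[h_\eta(x)]$, $\eta^{pu}(\eta) = \mathbb{E}_f[h_\eta(x)]$, and assume $\gamma$ is differentiable on $[0,1]$ with $\gamma(0)=0$ and $\gamma(1)=1$. Define $\mathrm{AUC} = \int_0^1 \gamma(\eta)\,d\eta$ and $\mathrm{AUC}^{pu} = \int_0^1 \gamma^{pu}(\eta)\,\frac{d\eta^{pu}(\eta)}{d\eta}\,d\eta$. Then $$\mathrm{AUC} = \frac{\mathrm{AUC}^{pu} - \frac{1-(\beta-\alpha)}{2}}{\beta-\alpha}.$$ Moreover, $\mathrm{AUC} > \mathrm{AUC}^{pu}$ if and only if $\mathrm{AUC}^{pu} > 1/2$ and $\beta-\alpha < 1$.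
   Context: $\mathbb{E}_p[\cdot]$ denotes expectation with respect to the distribution $p$ on $\mathcal{X}$. Output $1$ of a classifier means "positive". $\mathrm{AUC}$ is the area under the ROC curve $\eta\mapsto\gamma(\eta)$ (true positive rate against false positive rate), and $\mathrm{AUC}^{pu}$ is the area under the positive-unlabeled ROC curve obtained by plotting $\gamma^{pu}$ against $\eta^{pu}$ along the same family of classifiers. *)

theory Defs
  imports "HOL-Probability.Probability"
begin

definition mixture :: "real \<Rightarrow> 'a measure \<Rightarrow> 'a measure \<Rightarrow> 'a measure" where
  "mixture a M N = measure_of (space M) (sets M)
     (\<lambda>A. ennreal a * emeasure M A + ennreal (1 - a) * emeasure N A)"

definition classifier :: "'a measure \<Rightarrow> ('a \<Rightarrow> real) \<Rightarrow> bool" where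
  "classifier M h \<longleftrightarrow> h \<in> borel_measurable M \<and> (\<forall>x\<in>space M. h x = 0 \<or> h x = 1)"

end

theory Submission
  imports Defs
begin

lemma mixture_basic:
  assumes "sets N = sets M" "0 \<le> a" "a \<le> 1"
  shows "sets (mixture a M N) = sets M" "space (mixture a M N) = space M"
    and "\<And>A. A \<in> sets M \<Longrightarrow> emeasure (mixture a M N) A = ennreal a * emeasure M A + ennreal (1 - a) * emeasure N A"
proof -
  show "sets (mixture a M N) = sets M" unfolding mixture_def by (simp add: sets.sigma_sets_eq)
  show "space (mixture a M N) = space M" unfolding mixture_def by simp
  fix A assume A: "A \<in> sets M"
  have pos: "positive (sets M) (\<lambda>A. ennreal a * emeasure M A + ennreal (1 - a) * emeasure N A)"
    by (simp add: positive_def)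
  have ca: "countably_additive (sets M) (\<lambda>A. ennreal a * emeasure M A + ennreal (1 - a) * emeasure N A)"
  proof (rule countably_additiveI)
    fix B :: "nat \<Rightarrow> _" assume B: "range B \<subseteq> sets M" "disjoint_family B" "\<Union> (range B) \<in> sets M"
    have "(\<Sum>i. ennreal a * emeasure M (B i) + ennreal (1 - a) * emeasure N (B i))
       = ennreal a * (\<Sum>i. emeasure M (B i)) + ennreal (1 - a) * (\<Sum>i. emeasure N (B i))"
      by (simp add: suminf_add[symmetric] ennreal_suminf_cmult)
    also have "\<dots> = ennreal a * emeasure M (\<Union> (range B)) + ennreal (1 - a) * emeasure N (\<Union> (range B))"
      using B assms(1) by (simp add: suminf_emeasure)
    finally show "(\<Sum>i. ennreal a * emeasure M (B i) + ennreal (1 - a) * emeasure N (B i)) = ennreal a * emeasure M (\<Union> (range B)) + ennreal (1 - a) * emeasure N (\<Union> (range B))" .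
  qed
  show "emeasure (mixture a M N) A = ennreal a * emeasure M A + ennreal (1 - a) * emeasure N A"
    unfolding mixture_def
    by (rule emeasure_measure_of_sigma[OF sets.sigma_algebra_axioms pos ca A])
qed

lemma mixture_finite:
  assumes "finite_measure M" "finite_measure N" "sets N = sets M" "0 \<le> a" "a \<le> 1"
  shows "finite_measure (mixture a M N)"
    and "\<And>A. A \<in> sets M \<Longrightarrow> measure (mixture a M N) A = a * measure M A + (1 - a) * measure N A"
proof -
  note mb = mixture_basic[OF assms(3-5)]
  have fM: "emeasure M A \<noteq> \<top>" for A using assms(1) finite_measure.emeasure_finite by blast
  have fN: "emeasure N A \<noteq> \<top>" for A using assms(2) finite_measure.emeasure_finite by blast
  show "finite_measure (mixture a M N)"
    by (rule finite_measureI) (simp add: mb fM fN ennreal_mult_eq_top_iff)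
  fix A assume A: "A \<in> sets M"
  have e1: "emeasure M A = ennreal (measure M A)" using fM emeasure_eq_ennreal_measure by blast
  have e2: "emeasure N A = ennreal (measure N A)" using fN emeasure_eq_ennreal_measure by blast
  have p1: "ennreal a * ennreal (measure M A) = ennreal (a * measure M A)"
    using assms(4) by (simp add: ennreal_mult)
  have p2: "ennreal (1 - a) * ennreal (measure N A) = ennreal ((1 - a) * measure N A)"
    using assms(5) by (simp add: ennreal_mult)
  have nn: "0 \<le> a * measure M A" "0 \<le> (1 - a) * measure N A" using assms(4,5) by auto
  have "emeasure (mixture a M N) A = ennreal (a * measure M A + (1 - a) * measure N A)"
    unfolding mb(3)[OF A] e1 e2 p1 p2 using ennreal_plus[OF nn] by simp
  then show "measure (mixture a M N) A = a * measure M A + (1 - a) * measure N A"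
  proof -
    have "measure (mixture a M N) A = enn2real (emeasure (mixture a M N) A)" by (simp add: measure_def)
    also have "\<dots> = a * measure M A + (1 - a) * measure N A"
      using \<open>emeasure (mixture a M N) A = _\<close> nn by (simp only: enn2real_ennreal add_nonneg_nonneg)
    finally show ?thesis .
  qed
qed

lemma lint_classifier:
  assumes "classifier M h" "finite_measure N" "sets N = sets M"
  shows "(LINT x|N. h x) = measure N {x\<in>space M. h x = 1}"
proof -
  let ?A = "{x\<in>space M. h x = 1}"
  have sp: "space N = space M" using assms(3) sets_eq_imp_space_eq by blast
  have "h -` {1} \<inter> space M \<in> sets M" using assms(1) unfolding classifier_def
    by (intro measurable_sets[where A=borel]) auto
  moreover have "h -` {1} \<inter> space M = ?A" by auto
  ultimately have A: "?A \<in> sets M" by simp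
  have "(LINT x|N. h x) = (LINT x|N. indicator ?A x)"
    using assms(1) sp unfolding classifier_def
    by (intro Bochner_Integration.integral_cong) (auto simp: indicator_def)
  also have "\<dots> = measure N ?A"
    using A assms by (simp add: finite_measure.emeasure_finite)
  finally show ?thesis .
qed

theorem theorem1:
  fixes F1 F0 :: "'a measure" and \<alpha> \<beta> :: real and H :: "real \<Rightarrow> 'a \<Rightarrow> real"
  assumes "prob_space F1" and "prob_space F0" and "sets F0 = sets F1"
    and "0 \<le> \<alpha>" and "\<alpha> < 1" and "\<alpha> < \<beta>" and "\<beta> \<le> 1"
  defines "F \<equiv> mixture \<alpha> F1 F0" and "G \<equiv> mixture \<beta> F1 F0"
  shows
    "(\<forall>h. classifier F1 h \<longrightarrow>
        (let \<gamma> = (LINT x|F1. h x); \<eta> = (LINT x|F0. h x);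
             \<gamma>pu = (LINT x|G. h x); \<eta>pu = (LINT x|F. h x) in
         \<gamma> = ((1 - \<alpha>) * \<gamma>pu - (1 - \<beta>) * \<eta>pu) / (\<beta> - \<alpha>) \<and>
         \<eta> = (\<beta> * \<eta>pu - \<alpha> * \<gamma>pu) / (\<beta> - \<alpha>)))
   \<and> (\<forall>h c. classifier F1 h \<and> 0 < c \<and> c < 1 \<longrightarrow>
        (let \<gamma> = (LINT x|F1. h x); \<eta>pu = (LINT x|F. h x);
             \<rho> = \<alpha> * (LINT x|F1. h x) / (LINT x|F. h x);
             \<rho>pu = c * (LINT x|G. h x) / (LINT x|mixture c G F. h x) in
         (LINT x|F. h x) \<noteq> 0 \<and> (LINT x|mixture c G F. h x) \<noteq> 0 \<and> \<rho>pu \<noteq> 1 \<longrightarrow>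
         \<rho> = \<alpha> * (1 - \<alpha>) / (\<beta> - \<alpha>) *
               ((1 - c) / c * (\<rho>pu / (1 - \<rho>pu)) - (1 - \<beta>) / (1 - \<alpha>)) \<and>
         \<rho> = \<alpha> * \<gamma> / \<eta>pu))
   \<and> ((\<forall>t\<in>{0..1}. classifier F1 (H t) \<and> (LINT x|F0. H t x) = t) \<and>
       (\<lambda>t. LINT x|F1. H t x) differentiable_on {0..1} \<and>
       (LINT x|F1. H 0 x) = 0 \<and> (LINT x|F1. H 1 x) = 1 \<longrightarrow>
       (let AUC = integral {0..1} (\<lambda>t. LINT x|F1. H t x);
            AUCpu = integral {0..1} (\<lambda>t. (LINT x|G. H t x) *
                      vector_derivative (\<lambda>s. LINT x|F. H s x) (at t within {0..1})) in
        AUC = (AUCpu - (1 - (\<beta> - \<alpha>)) / 2) / (\<beta> - \<alpha>) \<and>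
        (AUC > AUCpu \<longleftrightarrow> AUCpu > 1 / 2 \<and> \<beta> - \<alpha> < 1)))"
proof -
  have fF1: "finite_measure F1" using assms(1) unfolding prob_space_def by simp
  have fF0: "finite_measure F0" using assms(2) unfolding prob_space_def by simp
  have fF: "finite_measure F" and mF: "\<And>A. A \<in> sets F1 \<Longrightarrow> measure F A = \<alpha> * measure F1 A + (1 - \<alpha>) * measure F0 A"
    unfolding F_def using mixture_finite[OF fF1 fF0 assms(3)] assms by auto
  have fG: "finite_measure G" and mG: "\<And>A. A \<in> sets F1 \<Longrightarrow> measure G A = \<beta> * measure F1 A + (1 - \<beta>) * measure F0 A"
    unfolding G_def using mixture_finite[OF fF1 fF0 assms(3)] assms by auto
  have sF: "sets F = sets F1" unfolding F_def using mixture_basic[OF assms(3)] assms by auto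
  have sG: "sets G = sets F1" unfolding G_def using mixture_basic[OF assms(3)] assms by auto
  have key: "(LINT x|F. h x) = \<alpha> * (LINT x|F1. h x) + (1 - \<alpha>) * (LINT x|F0. h x)
      \<and> (LINT x|G. h x) = \<beta> * (LINT x|F1. h x) + (1 - \<beta>) * (LINT x|F0. h x)"
    if h: "classifier F1 h" for h
  proof -
    let ?A = "{x\<in>space F1. h x = 1}"
    have A: "?A \<in> sets F1"
    proof -
      have "h -` {1} \<inter> space F1 \<in> sets F1" using h unfolding classifier_def
        by (intro measurable_sets[where A=borel]) auto
      moreover have "h -` {1} \<inter> space F1 = ?A" by auto
      ultimately show ?thesis by simp
    qed
    show ?thesis
      using lint_classifier[OF h fF sF] lint_classifier[OF h fG sG]
        lint_classifier[OF h fF1 refl] lint_classifier[OF h fF0 assms(3)] mF[OF A] mG[OF A]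
      by simp
  qed
  have keyc: "(LINT x|mixture c G F. h x) = c * (LINT x|G. h x) + (1 - c) * (LINT x|F. h x)"
    if h: "classifier F1 h" and c: "0 < c" "c < 1" for h c
  proof -
    let ?A = "{x\<in>space F1. h x = 1}"
    have A: "?A \<in> sets F1"
    proof -
      have "h -` {1} \<inter> space F1 \<in> sets F1" using h unfolding classifier_def
        by (intro measurable_sets[where A=borel]) auto
      moreover have "h -` {1} \<inter> space F1 = ?A" by auto
      ultimately show ?thesis by simp
    qed
    have sFG: "sets F = sets G" using sF sG by simp
    have fm: "finite_measure (mixture c G F)" 
      and mm: "measure (mixture c G F) ?A = c * measure G ?A + (1 - c) * measure F ?A"
      using mixture_finite[OF fG fF sFG, of c] c A sG by auto
    have sm: "sets (mixture c G F) = sets F1" using mixture_basic[OF sFG, of c] c sG by auto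
    show ?thesis
      using lint_classifier[OF h fF sF] lint_classifier[OF h fG sG]
        lint_classifier[OF h fm sm] mm by simp
  qed
  have ab: "\<beta> - \<alpha> > 0" using assms by simp
  have P1: "\<forall>h. classifier F1 h \<longrightarrow>
        (let \<gamma> = (LINT x|F1. h x); \<eta> = (LINT x|F0. h x);
             \<gamma>pu = (LINT x|G. h x); \<eta>pu = (LINT x|F. h x) in
         \<gamma> = ((1 - \<alpha>) * \<gamma>pu - (1 - \<beta>) * \<eta>pu) / (\<beta> - \<alpha>) \<and>
         \<eta> = (\<beta> * \<eta>pu - \<alpha> * \<gamma>pu) / (\<beta> - \<alpha>))"
  proof (intro allI impI)
    fix h assume h: "classifier F1 h"
    show "let \<gamma> = (LINT x|F1. h x); \<eta> = (LINT x|F0. h x);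
             \<gamma>pu = (LINT x|G. h x); \<eta>pu = (LINT x|F. h x) in
         \<gamma> = ((1 - \<alpha>) * \<gamma>pu - (1 - \<beta>) * \<eta>pu) / (\<beta> - \<alpha>) \<and>
         \<eta> = (\<beta> * \<eta>pu - \<alpha> * \<gamma>pu) / (\<beta> - \<alpha>)"
    proof -
      define p where "p = (LINT x|F1. h x)"
      define q where "q = (LINT x|F0. h x)"
      have eF: "(LINT x|F. h x) = \<alpha> * p + (1 - \<alpha>) * q" and eG: "(LINT x|G. h x) = \<beta> * p + (1 - \<beta>) * q"
        using key[OF h] unfolding p_def q_def by auto
      show ?thesis unfolding Let_def eF eG p_def[symmetric] q_def[symmetric] using ab
        by (simp add: field_simps)
    qed
  qed
  have P2: "\<forall>h c. classifier F1 h \<and> 0 < c \<and> c < 1 \<longrightarrow>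
        (let \<gamma> = (LINT x|F1. h x); \<eta>pu = (LINT x|F. h x);
             \<rho> = \<alpha> * (LINT x|F1. h x) / (LINT x|F. h x);
             \<rho>pu = c * (LINT x|G. h x) / (LINT x|mixture c G F. h x) in
         (LINT x|F. h x) \<noteq> 0 \<and> (LINT x|mixture c G F. h x) \<noteq> 0 \<and> \<rho>pu \<noteq> 1 \<longrightarrow>
         \<rho> = \<alpha> * (1 - \<alpha>) / (\<beta> - \<alpha>) *
               ((1 - c) / c * (\<rho>pu / (1 - \<rho>pu)) - (1 - \<beta>) / (1 - \<alpha>)) \<and>
         \<rho> = \<alpha> * \<gamma> / \<eta>pu)"
  proof (intro allI impI, elim conjE)
    fix h and c :: real assume h: "classifier F1 h" and c: "0 < c" "c < 1"
    define p where "p = (LINT x|F1. h x)"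
    define q where "q = (LINT x|F0. h x)"
    have eF: "(LINT x|F. h x) = \<alpha> * p + (1 - \<alpha>) * q" and eG: "(LINT x|G. h x) = \<beta> * p + (1 - \<beta>) * q"
      using key[OF h] unfolding p_def q_def by auto
    have eM: "(LINT x|mixture c G F. h x) = c * (\<beta> * p + (1 - \<beta>) * q) + (1 - c) * (\<alpha> * p + (1 - \<alpha>) * q)"
      using keyc[OF h c] eF eG by simp
    show "let \<gamma> = (LINT x|F1. h x); \<eta>pu = (LINT x|F. h x);
             \<rho> = \<alpha> * (LINT x|F1. h x) / (LINT x|F. h x);
             \<rho>pu = c * (LINT x|G. h x) / (LINT x|mixture c G F. h x) in
         (LINT x|F. h x) \<noteq> 0 \<and> (LINT x|mixture c G F. h x) \<noteq> 0 \<and> \<rho>pu \<noteq> 1 \<longrightarrow>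
         \<rho> = \<alpha> * (1 - \<alpha>) / (\<beta> - \<alpha>) *
               ((1 - c) / c * (\<rho>pu / (1 - \<rho>pu)) - (1 - \<beta>) / (1 - \<alpha>)) \<and>
         \<rho> = \<alpha> * \<gamma> / \<eta>pu"
      unfolding Let_def eF eG eM p_def[symmetric]
    proof (intro impI conjI, elim conjE)
      define u where "u = \<alpha> * p + (1 - \<alpha>) * q"
      define v where "v = \<beta> * p + (1 - \<beta>) * q"
      assume u0: "\<alpha> * p + (1 - \<alpha>) * q \<noteq> 0" and m0: "c * (\<beta> * p + (1 - \<beta>) * q) + (1 - c) * (\<alpha> * p + (1 - \<alpha>) * q) \<noteq> 0"
        and r1: "c * (\<beta> * p + (1 - \<beta>) * q) / (c * (\<beta> * p + (1 - \<beta>) * q) + (1 - c) * (\<alpha> * p + (1 - \<alpha>) * q)) \<noteq> 1"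
      have u0': "u \<noteq> 0" and m0': "c * v + (1 - c) * u \<noteq> 0" using u0 m0 unfolding u_def v_def by auto
      have r: "c * v / (c * v + (1 - c) * u) / (1 - c * v / (c * v + (1 - c) * u)) = c * v / ((1 - c) * u)"
      proof -
        define D where "D = c * v + (1 - c) * u"
        have D0: "D \<noteq> 0" using m0' unfolding D_def .
        have "1 - c * v / D = (1 - c) * u / D" using D0 unfolding D_def by (simp add: field_simps)
        then have "c * v / D / (1 - c * v / D) = (c * v / D) / ((1 - c) * u / D)" by simp
        also have "\<dots> = c * v / ((1 - c) * u)" using D0 by simp
        finally show ?thesis unfolding D_def .
      qed
      have pv: "(\<beta> - \<alpha>) * p = (1 - \<alpha>) * v - (1 - \<beta>) * u" unfolding u_def v_def by (simp add: algebra_simps)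
      have "\<alpha> * p / u = \<alpha> * (1 - \<alpha>) / (\<beta> - \<alpha>) * ((1 - c) / c * (c * v / ((1 - c) * u)) - (1 - \<beta>) / (1 - \<alpha>))"
      proof -
        have "(1 - c) / c * (c * v / ((1 - c) * u)) = v / u" using c u0' by (simp add: field_simps)
        moreover have "\<alpha> * (1 - \<alpha>) / (\<beta> - \<alpha>) * (v / u - (1 - \<beta>) / (1 - \<alpha>)) = \<alpha> * ((1 - \<alpha>) * v - (1 - \<beta>) * u) / ((\<beta> - \<alpha>) * u)"
        proof -
          have a1: "1 - \<alpha> \<noteq> 0" using assms(5) by simp
          have "v / u - (1 - \<beta>) / (1 - \<alpha>) = ((1 - \<alpha>) * v - (1 - \<beta>) * u) / ((1 - \<alpha>) * u)"
            using u0' a1 by (simp add: field_simps)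
          then have "\<alpha> * (1 - \<alpha>) / (\<beta> - \<alpha>) * (v / u - (1 - \<beta>) / (1 - \<alpha>))
             = (\<alpha> * (1 - \<alpha>) * ((1 - \<alpha>) * v - (1 - \<beta>) * u)) / ((\<beta> - \<alpha>) * ((1 - \<alpha>) * u))"
            by simp
          also have "\<dots> = \<alpha> * ((1 - \<alpha>) * v - (1 - \<beta>) * u) / ((\<beta> - \<alpha>) * u)"
            using a1 by (simp add: mult.left_commute[of "1 - \<alpha>"])
          finally show ?thesis .
        qed
        moreover have "\<alpha> * p / u = \<alpha> * ((\<beta> - \<alpha>) * p) / ((\<beta> - \<alpha>) * u)" using ab u0' by simp
        ultimately show ?thesis unfolding pv by simp
      qed
      then show "\<alpha> * p / (\<alpha> * p + (1 - \<alpha>) * q) = \<alpha> * (1 - \<alpha>) / (\<beta> - \<alpha>) *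
         ((1 - c) / c * (c * (\<beta> * p + (1 - \<beta>) * q) / (c * (\<beta> * p + (1 - \<beta>) * q) + (1 - c) * (\<alpha> * p + (1 - \<alpha>) * q)) /
                         (1 - c * (\<beta> * p + (1 - \<beta>) * q) / (c * (\<beta> * p + (1 - \<beta>) * q) + (1 - c) * (\<alpha> * p + (1 - \<alpha>) * q)))) -
          (1 - \<beta>) / (1 - \<alpha>))"
        unfolding u_def[symmetric] v_def[symmetric] r .
    qed simp
  qed
  have P3: "(\<forall>t\<in>{0..1}. classifier F1 (H t) \<and> (LINT x|F0. H t x) = t) \<and>
       (\<lambda>t. LINT x|F1. H t x) differentiable_on {0..1} \<and>
       (LINT x|F1. H 0 x) = 0 \<and> (LINT x|F1. H 1 x) = 1 \<longrightarrow>
       (let AUC = integral {0..1} (\<lambda>t. LINT x|F1. H t x);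
            AUCpu = integral {0..1} (\<lambda>t. (LINT x|G. H t x) *
                      vector_derivative (\<lambda>s. LINT x|F. H s x) (at t within {0..1})) in
        AUC = (AUCpu - (1 - (\<beta> - \<alpha>)) / 2) / (\<beta> - \<alpha>) \<and>
        (AUC > AUCpu \<longleftrightarrow> AUCpu > 1 / 2 \<and> \<beta> - \<alpha> < 1))"
  proof (intro impI, elim conjE)
    define g where "g = (\<lambda>t. LINT x|F1. H t x)"
    define g' where "g' = (\<lambda>t. vector_derivative g (at t within {0..1::real}))"
    assume Ht: "\<forall>t\<in>{0..1}. classifier F1 (H t) \<and> (LINT x|F0. H t x) = t"
      and dif: "(\<lambda>t. LINT x|F1. H t x) differentiable_on {0..1}"
      and g0: "(LINT x|F1. H 0 x) = 0" and g1: "(LINT x|F1. H 1 x) = 1"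
    have g0': "g 0 = 0" and g1': "g 1 = 1" using g0 g1 unfolding g_def by auto
    have eF: "(LINT x|F. H t x) = \<alpha> * g t + (1 - \<alpha>) * t" if "t \<in> {0..1}" for t
      using key[of "H t"] Ht that unfolding g_def by auto
    have eG: "(LINT x|G. H t x) = \<beta> * g t + (1 - \<beta>) * t" if "t \<in> {0..1}" for t
      using key[of "H t"] Ht that unfolding g_def by auto
    have dg: "(g has_real_derivative g' t) (at t within {0..1})" if "t \<in> {0..1}" for t
    proof -
      have "g differentiable (at t within {0..1})" using dif that unfolding g_def differentiable_on_def by auto
      then show ?thesis unfolding g'_def has_real_derivative_iff_has_vector_derivative
        using vector_derivative_works by blast
    qed
    have cg: "continuous_on {0..1} g" using dif unfolding g_def by (rule differentiable_imp_continuous_on)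
    have dF: "vector_derivative (\<lambda>s. LINT x|F. H s x) (at t within {0..1}) = \<alpha> * g' t + (1 - \<alpha>)"
      if t: "t \<in> {0..1}" for t
    proof -
      have "((\<lambda>s. \<alpha> * g s + (1 - \<alpha>) * s) has_real_derivative (\<alpha> * g' t + (1 - \<alpha>))) (at t within {0..1})"
        using dg[OF t] by (auto intro!: derivative_eq_intros)
      then have "((\<lambda>s. \<alpha> * g s + (1 - \<alpha>) * s) has_vector_derivative (\<alpha> * g' t + (1 - \<alpha>))) (at t within {0..1})"
        by (simp add: has_real_derivative_iff_has_vector_derivative)
      then have "((\<lambda>s. LINT x|F. H s x) has_vector_derivative (\<alpha> * g' t + (1 - \<alpha>))) (at t within {0..1})"
        by (rule has_vector_derivative_transform_within[where d=1]) (use t eF in auto)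
      then show ?thesis by (intro vector_derivative_within_closed_interval) (use t in auto)
    qed
    define A where "A = integral {0..1} g"
    have I1: "((\<lambda>t. g t * g' t) has_integral 1/2) {0..1}"
    proof -
      have "((\<lambda>t. g t * g' t) has_integral ((\<lambda>t. g t ^ 2 / 2) 1 - (\<lambda>t. g t ^ 2 / 2) 0)) {0..1}"
        by (rule fundamental_theorem_of_calculus)
           (auto simp: has_real_derivative_iff_has_vector_derivative[symmetric]
                 intro!: derivative_eq_intros dg)
      then show ?thesis using g0' g1' by simp
    qed
    have I2: "((\<lambda>t. t * g' t + g t) has_integral 1) {0..1}"
    proof -
      have "((\<lambda>t. t * g' t + g t) has_integral ((\<lambda>t. t * g t) 1 - (\<lambda>t. t * g t) 0)) {0..1}"
        by (rule fundamental_theorem_of_calculus)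
           (auto simp: has_real_derivative_iff_has_vector_derivative[symmetric]
                 intro!: derivative_eq_intros dg)
      then show ?thesis using g0' g1' by simp
    qed
    have I3: "(g has_integral A) {0..1}"
      unfolding A_def using integrable_continuous_interval[OF cg] by (rule integrable_integral)
    have I4: "((\<lambda>t. t) has_integral 1/2) {0..1::real}"
    proof -
      have "((\<lambda>t. t) has_integral ((\<lambda>t. t ^ 2 / 2) 1 - (\<lambda>t. t ^ 2 / 2) (0::real))) {0..1}"
        by (rule fundamental_theorem_of_calculus)
           (auto simp: has_real_derivative_iff_has_vector_derivative[symmetric]
                 intro!: derivative_eq_intros)
      then show ?thesis by simp
    qed
    have Isum: "((\<lambda>t. \<alpha> * \<beta> * (g t * g' t) + \<alpha> * (1 - \<beta>) * (t * g' t + g t)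
          + (\<beta> * (1 - \<alpha>) - \<alpha> * (1 - \<beta>)) * g t + (1 - \<alpha>) * (1 - \<beta>) * t) has_integral
        (\<alpha> * \<beta> * (1/2) + \<alpha> * (1 - \<beta>) * 1 + (\<beta> * (1 - \<alpha>) - \<alpha> * (1 - \<beta>)) * A + (1 - \<alpha>) * (1 - \<beta>) * (1/2))) {0..1}"
      by (intro has_integral_add has_integral_mult_right I1 I2 I3 I4)
    define AUCpu where "AUCpu = integral {0..1} (\<lambda>t. (LINT x|G. H t x) *
                      vector_derivative (\<lambda>s. LINT x|F. H s x) (at t within {0..1}))"
    have "AUCpu = integral {0..1} (\<lambda>t. \<alpha> * \<beta> * (g t * g' t) + \<alpha> * (1 - \<beta>) * (t * g' t + g t)
          + (\<beta> * (1 - \<alpha>) - \<alpha> * (1 - \<beta>)) * g t + (1 - \<alpha>) * (1 - \<beta>) * t)"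
      unfolding AUCpu_def
      by (rule integral_cong) (simp add: eG dF algebra_simps)
    also have "\<dots> = \<alpha> * \<beta> * (1/2) + \<alpha> * (1 - \<beta>) * 1 + (\<beta> * (1 - \<alpha>) - \<alpha> * (1 - \<beta>)) * A + (1 - \<alpha>) * (1 - \<beta>) * (1/2)"
      using Isum by (rule integral_unique)
    finally have AU: "AUCpu = (\<beta> - \<alpha>) * A + (1 - (\<beta> - \<alpha>)) / 2" by (simp add: field_simps)
    have "A = (AUCpu - (1 - (\<beta> - \<alpha>)) / 2) / (\<beta> - \<alpha>)" using AU ab by (simp add: field_simps)
    moreover have "A > AUCpu \<longleftrightarrow> AUCpu > 1 / 2 \<and> \<beta> - \<alpha> < 1"
    proof -
      have d1: "\<beta> - \<alpha> \<le> 1" using assms by simp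
      have e1: "A - AUCpu = (1 - (\<beta> - \<alpha>)) * (A - 1/2)" using AU by (simp add: algebra_simps add_divide_distrib diff_divide_distrib)
      have e2: "AUCpu - 1/2 = (\<beta> - \<alpha>) * (A - 1/2)" using AU by (simp add: algebra_simps add_divide_distrib diff_divide_distrib)
      have "A > AUCpu \<longleftrightarrow> (1 - (\<beta> - \<alpha>)) * (A - 1/2) > 0" using e1 by linarith
      also have "\<dots> \<longleftrightarrow> \<beta> - \<alpha> < 1 \<and> A - 1/2 > 0" using d1 zero_less_mult_iff by fastforce
      also have "\<dots> \<longleftrightarrow> \<beta> - \<alpha> < 1 \<and> AUCpu > 1/2" using e2 ab zero_less_mult_iff
        by (smt (verit, best) mult_pos_pos)
      finally show ?thesis by blast
    qed
    ultimately show "let AUC = integral {0..1} (\<lambda>t. LINT x|F1. H t x);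
            AUCpu = integral {0..1} (\<lambda>t. (LINT x|G. H t x) *
                      vector_derivative (\<lambda>s. LINT x|F. H s x) (at t within {0..1})) in
        AUC = (AUCpu - (1 - (\<beta> - \<alpha>)) / 2) / (\<beta> - \<alpha>) \<and>
        (AUC > AUCpu \<longleftrightarrow> AUCpu > 1 / 2 \<and> \<beta> - \<alpha> < 1)"
      unfolding Let_def AUCpu_def[symmetric] A_def g_def by simp
  qed
  show ?thesis using P1 P2 P3 by blast
qed

end
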